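(* With $\ell_K:=\inf_{W\in M_K}\mathcal{L}_K(W)$ for $K\in(0,\infty]$, one has $\limsup_{K\to\infty}\ell_K\le\ell_\infty$.
   Context: Fix $p>2$, $1<q<p$, $\sigma^2>0$. For $K\in(0,\infty)$, $I_K=(-K,K]$ with functions identified with $2K$-periodic functions on $\mathbb{R}$; $I_\infty=\mathbb{R}$; $\|\cdot\|_{r,I_K}$ is the $L^r$ norm over $I_K$. $(\mathcal{A}W)(\varphi)=\int_{\varphi-1/2}^{\varphi+1/2}W(s)\,ds$. $X_K=\{W\in L^2(I_K):\mathcal{A}W\in L^q(I_K)\cap L^p(I_K)\}$, $\mathcal{Q}_K(W)=\int_{I_K}|\mathcal{A}W|^q$, $\mathcal{P}_K(W)=\int_{I_K}|\mathcal{A}W|^p$, $\mathcal{L}_K(W)=\tfrac12\sigma^2\|W\|_{2,I_K}^2+\mathcal{Q}_K(W)-\mathcal{P}_K(W)$, $\mathcal{F}_K(W)=\sigma^2\|W\|_{2,I_K}^2+q\mathcal{Q}_K(W)-p\mathcal{P}_K(W)$, $M_K=\{W\in X_K:W\ne0,\ \mathcal{F}_K(W)=0\}$. *)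

theory Defs
  imports "HOL-Analysis.Analysis"
begin

text \<open>K ranges over (0,\<infinity>]; we use extended reals, K = \<infinity> meaning the whole line.
  I_K = (-K,K] for finite K, I_\<infinity> = the real line.\<close>
definition I_set :: "ereal \<Rightarrow> real set" where
  "I_set K = (case K of ereal k \<Rightarrow> {-k<..k} | _ \<Rightarrow> UNIV)"

text \<open>For finite K, functions are identified with 2K-periodic functions on the line.\<close>
definition periodic_fun :: "ereal \<Rightarrow> (real \<Rightarrow> real) \<Rightarrow> bool" where
  "periodic_fun K W = (\<forall>k. K = ereal k \<longrightarrow> (\<forall>x. W (x + 2 * k) = W x))"

definition avg :: "(real \<Rightarrow> real) \<Rightarrow> real \<Rightarrow> real" where
  "avg W \<phi> = (LINT s:{\<phi> - 1/2..\<phi> + 1/2}|lborel. W s)"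

definition in_Lr :: "real \<Rightarrow> real set \<Rightarrow> (real \<Rightarrow> real) \<Rightarrow> bool" where
  "in_Lr r I f = (f \<in> borel_measurable borel \<and> set_integrable lborel I (\<lambda>x. \<bar>f x\<bar> powr r))"

definition Lr_pow :: "real \<Rightarrow> real set \<Rightarrow> (real \<Rightarrow> real) \<Rightarrow> real" where
  "Lr_pow r I f = (LINT x:I|lborel. \<bar>f x\<bar> powr r)"

definition X_space :: "real \<Rightarrow> real \<Rightarrow> ereal \<Rightarrow> (real \<Rightarrow> real) set" where
  "X_space p q K = {W. periodic_fun K W \<and> in_Lr 2 (I_set K) W
      \<and> in_Lr q (I_set K) (avg W) \<and> in_Lr p (I_set K) (avg W)}"

definition Q_fun :: "real \<Rightarrow> ereal \<Rightarrow> (real \<Rightarrow> real) \<Rightarrow> real" where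
  "Q_fun q K W = Lr_pow q (I_set K) (avg W)"

definition P_fun :: "real \<Rightarrow> ereal \<Rightarrow> (real \<Rightarrow> real) \<Rightarrow> real" where
  "P_fun p K W = Lr_pow p (I_set K) (avg W)"

definition L_fun :: "real \<Rightarrow> real \<Rightarrow> real \<Rightarrow> ereal \<Rightarrow> (real \<Rightarrow> real) \<Rightarrow> real" where
  "L_fun p q sig2 K W = 1/2 * sig2 * Lr_pow 2 (I_set K) W + Q_fun q K W - P_fun p K W"

definition F_fun :: "real \<Rightarrow> real \<Rightarrow> real \<Rightarrow> ereal \<Rightarrow> (real \<Rightarrow> real) \<Rightarrow> real" where
  "F_fun p q sig2 K W = sig2 * Lr_pow 2 (I_set K) W + q * Q_fun q K W - p * P_fun p K W"

text \<open>Nehari-type set M_K; W \<noteq> 0 means W is nonzero in L^2(I_K), i.e. its L^2 norm is nonzero.\<close>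
definition M_set :: "real \<Rightarrow> real \<Rightarrow> real \<Rightarrow> ereal \<Rightarrow> (real \<Rightarrow> real) set" where
  "M_set p q sig2 K = {W \<in> X_space p q K. Lr_pow 2 (I_set K) W \<noteq> 0 \<and> F_fun p q sig2 K W = 0}"

definition ell :: "real \<Rightarrow> real \<Rightarrow> real \<Rightarrow> ereal \<Rightarrow> ereal" where
  "ell p q sig2 K = (INF W \<in> M_set p q sig2 K. ereal (L_fun p q sig2 K W))"

end

theory Submission
  imports Defs
begin

lemma sign_lemma:
  fixes p q a b c t :: real
  assumes "p > 2" "1 < q" "q < p" "a > 0" "b \<ge> 0" "c > 0" "a + q*b - p*c = 0" "t > 0"
  shows "t < 1 \<Longrightarrow> t powr 2 * a + q * (t powr q * b) - p * (t powr p * c) > 0"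
    and "t > 1 \<Longrightarrow> t powr 2 * a + q * (t powr q * b) - p * (t powr p * c) < 0"
proof -
  define m where "m = max 2 q"
  have m: "2 \<le> m" "q \<le> m" "m < p" using assms by (auto simp: m_def)
  {
    assume t1: "t < 1"
    have "t powr m \<le> t powr 2" using powr_mono'[of 2 m t] m t1 assms by auto
    hence 1: "t powr m * a \<le> t powr 2 * a" using assms by simp
    have "t powr m \<le> t powr q" using powr_mono'[of q m t] m t1 assms by auto
    hence 2: "q * (t powr m * b) \<le> q * (t powr q * b)" using assms by (simp add: mult_left_mono mult_right_mono)
    have "t powr (p - m) < 1" using powr01_less_one[of t "p-m"] m t1 assms by auto
    moreover have "t powr p = t powr m * t powr (p - m)" by (simp add: powr_add[symmetric])
    ultimately have "t powr p < t powr m" using assms by simp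
    hence 3: "p * (t powr p * c) < p * (t powr m * c)" using assms by simp
    have "t powr m * (a + q*b - p*c) = 0" using assms by simp
    thus "t powr 2 * a + q * (t powr q * b) - p * (t powr p * c) > 0"
      using 1 2 3 by (simp add: algebra_simps)
  }
  {
    assume t1: "t > 1"
    have "t powr 2 \<le> t powr m" using powr_mono[of 2 m t] m t1 assms by auto
    hence 1: "t powr 2 * a \<le> t powr m * a" using assms by simp
    have "t powr q \<le> t powr m" using powr_mono[of q m t] m t1 assms by auto
    hence 2: "q * (t powr q * b) \<le> q * (t powr m * b)" using assms by (simp add: mult_left_mono mult_right_mono)
    have "t powr m < t powr p" using m t1 by simp
    hence 3: "p * (t powr m * c) < p * (t powr p * c)" using assms by simp
    have "t powr m * (a + q*b - p*c) = 0" using assms by simp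
    thus "t powr 2 * a + q * (t powr q * b) - p * (t powr p * c) < 0"
      using 1 2 3 by (simp add: algebra_simps)
  }
qed

lemma rescale:
  fixes p q a b c e :: real and an bn cn :: "nat \<Rightarrow> real"
  assumes "p > 2" "1 < q" "q < p" "a > 0" "b \<ge> 0" "c \<ge> 0" "a + q*b - p*c = 0"
    "an \<longlonglongrightarrow> a" "bn \<longlonglongrightarrow> b" "cn \<longlonglongrightarrow> c"
    "\<And>n. an n \<ge> 0" "\<And>n. bn n \<ge> 0" "\<And>n. cn n \<ge> 0" "e > 0"
  shows "\<forall>\<^sub>F n in sequentially. an n > 0 \<and> (\<exists>t>0. t powr 2 * an n + q * (t powr q * bn n) - p * (t powr p * cn n) = 0
      \<and> t powr 2 * an n / 2 + t powr q * bn n - t powr p * cn n < a/2 + b - c + e)"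
proof -
  have c: "c > 0"
  proof -
    have "0 \<le> q * b" using assms by simp
    hence "0 < a + q * b" using assms by linarith
    hence "0 < p * c" using assms by linarith
    thus ?thesis using assms by (simp add: zero_less_mult_iff)
  qed
  define hb where "hb = (\<lambda>d::real. (1+d) powr 2 * a / 2 + (1+d) powr q * b - (1-d) powr p * c)"
  have "(hb \<longlongrightarrow> hb 0) (at_right 0)"
    unfolding hb_def by (intro tendsto_intros) auto
  moreover have "hb 0 = a/2 + b - c" by (simp add: hb_def)
  ultimately have "\<forall>\<^sub>F d in at_right 0. hb d < a/2 + b - c + e"
    using assms by (auto intro: order_tendstoD)
  moreover have "\<forall>\<^sub>F d in at_right (0::real). d < 1 \<and> d > 0"
    by (simp add: eventually_at_right_less eventually_conj eventually_at_right_field) (auto intro: exI[of _ 1])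
  ultimately have "\<forall>\<^sub>F d in at_right (0::real). hb d < a/2 + b - c + e \<and> d < 1 \<and> d > 0"
    by (rule eventually_conj)
  from eventually_happens[OF this] obtain d where d: "hb d < a/2 + b - c + e" "d < 1" "d > 0"
    using trivial_limit_at_right_real by blast
  define F where "F = (\<lambda>(x,y,z) t::real. t powr 2 * x + q * (t powr q * y) - p * (t powr p * z))"
  have Fpos: "F (a,b,c) (1-d) > 0" unfolding F_def using sign_lemma(1)[OF assms(1-5) c assms(7), of "1-d"] d by simp
  have Fneg: "F (a,b,c) (1+d) < 0" unfolding F_def using sign_lemma(2)[OF assms(1-5) c assms(7), of "1+d"] d by simp
  have lim1: "(\<lambda>n. F (an n, bn n, cn n) (1-d)) \<longlonglongrightarrow> F (a,b,c) (1-d)"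
    unfolding F_def using assms by (auto intro!: tendsto_intros)
  have lim2: "(\<lambda>n. F (an n, bn n, cn n) (1+d)) \<longlonglongrightarrow> F (a,b,c) (1+d)"
    unfolding F_def using assms by (auto intro!: tendsto_intros)
  have lim3: "(\<lambda>n. (1+d) powr 2 * an n / 2 + (1+d) powr q * bn n - (1-d) powr p * cn n) \<longlonglongrightarrow> hb d"
    unfolding hb_def using assms by (auto intro!: tendsto_intros)
  have ev: "\<forall>\<^sub>F n in sequentially. F (an n, bn n, cn n) (1-d) > 0 \<and> F (an n, bn n, cn n) (1+d) < 0
     \<and> (1+d) powr 2 * an n / 2 + (1+d) powr q * bn n - (1-d) powr p * cn n < a/2 + b - c + e \<and> an n > 0"
    using order_tendstoD(1)[OF lim1 Fpos] order_tendstoD(2)[OF lim2 Fneg] order_tendstoD(2)[OF lim3 d(1)]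
      order_tendstoD(1)[OF assms(8) assms(4)]
    by (intro eventually_conj) auto
  show ?thesis
  proof (rule eventually_mono[OF ev])
    fix n assume hh: "F (an n, bn n, cn n) (1-d) > 0 \<and> F (an n, bn n, cn n) (1+d) < 0
     \<and> (1+d) powr 2 * an n / 2 + (1+d) powr q * bn n - (1-d) powr p * cn n < a/2 + b - c + e \<and> an n > 0"
    hence h: "F (an n, bn n, cn n) (1-d) > 0" "F (an n, bn n, cn n) (1+d) < 0"
      "(1+d) powr 2 * an n / 2 + (1+d) powr q * bn n - (1-d) powr p * cn n < a/2 + b - c + e" "an n > 0" by auto
    have cont: "continuous_on {1-d..1+d} (F (an n, bn n, cn n))"
      unfolding F_def using d by (auto intro!: continuous_intros)
    obtain t where t: "t \<ge> 1-d" "t \<le> 1+d" "F (an n, bn n, cn n) t = 0"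
      using IVT2'[of "F (an n, bn n, cn n)" "1+d" 0 "1-d", OF _ _ _ cont] h d by force
    have tpos: "t > 0" using t d by simp
    have "t powr 2 * an n / 2 \<le> (1+d) powr 2 * an n / 2"
      using powr_mono2[of 2 t "1+d"] t tpos assms(11)[of n] by (simp add: divide_right_mono mult_right_mono)
    moreover have "t powr q * bn n \<le> (1+d) powr q * bn n"
      using powr_mono2[of q t "1+d"] t tpos assms(12)[of n] assms(2) by (simp add: mult_right_mono)
    moreover have "(1-d) powr p * cn n \<le> t powr p * cn n"
      using powr_mono2[of p "1-d" t] t d assms(13)[of n] assms(1) by (simp add: mult_right_mono)
    ultimately have "t powr 2 * an n / 2 + t powr q * bn n - t powr p * cn n < a/2 + b - c + e"
      using h(3) by linarith
    thus "0 < an n \<and> (\<exists>t>0. t powr 2 * an n + q * (t powr q * bn n) - p * (t powr p * cn n) = 0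
      \<and> t powr 2 * an n / 2 + t powr q * bn n - t powr p * cn n < a/2 + b - c + e)"
      using t tpos h(4) unfolding F_def by auto
  qed
qed


lemma avg_meas:
  assumes "W \<in> borel_measurable borel"
  shows "avg W \<in> borel_measurable borel"
proof -
  have eq: "avg W = (\<lambda>\<phi>. integral\<^sup>L lborel (\<lambda>s. indicator {\<phi> - 1/2..\<phi> + 1/2} s *\<^sub>R W s))"
    by (simp add: avg_def set_lebesgue_integral_def fun_eq_iff)
  have 1: "(\<lambda>(\<phi>::real, s::real). indicator {\<phi> - 1/2..\<phi> + 1/2} s *\<^sub>R W s) = (\<lambda>x. (if fst x - 1/2 \<le> snd x \<and> snd x \<le> fst x + 1/2 then 1 else 0) * W (snd x))"
    by (auto simp: fun_eq_iff indicator_def)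
  have "(\<lambda>(\<phi>::real, s::real). indicator {\<phi> - 1/2..\<phi> + 1/2} s *\<^sub>R W s) \<in> borel_measurable (borel \<Otimes>\<^sub>M lborel)"
    unfolding 1 using assms by measurable
  from lborel.borel_measurable_lebesgue_integral[OF this] show ?thesis unfolding eq by simp
qed

lemma abs_powr2: "\<bar>x::real\<bar> powr 2 = x\<^sup>2"
  by (cases "x = 0") (auto simp: powr_numeral)

lemma am_gm_abs:
  fixes x e :: real assumes "e > 0" shows "\<bar>x\<bar> \<le> e/2 + x\<^sup>2/(2*e)"
proof -
  have "0 \<le> (\<bar>x\<bar> - e)\<^sup>2" by simp
  hence "2*e*\<bar>x\<bar> \<le> e\<^sup>2 + x\<^sup>2" by (simp add: power2_eq_square algebra_simps)
  thus ?thesis using assms by (simp add: field_simps power2_eq_square)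
qed

lemma avg_cong:
  assumes "\<And>s. s \<in> {\<phi> - 1/2..\<phi> + 1/2} \<Longrightarrow> V s = W s"
  shows "avg V \<phi> = avg W \<phi>"
  unfolding avg_def by (rule set_lebesgue_integral_cong) (auto simp: assms)

lemma avg_small:
  fixes V g :: "real \<Rightarrow> real"
  assumes Vm: "V \<in> borel_measurable borel" and gi: "integrable lborel g" and g0: "\<And>s. g s \<ge> 0"
    and b: "\<And>s. s \<in> {\<phi> - 1/2..\<phi> + 1/2} \<Longrightarrow> (V s)\<^sup>2 \<le> g s" and e: "e > 0"
  shows "\<bar>avg V \<phi>\<bar> \<le> e/2 + (integral\<^sup>L lborel g)/(2*e)"
proof -
  define J where "J = {\<phi> - 1/2..\<phi> + 1/2}"
  define h where "h = (\<lambda>s. (e/2) * indicator J s + g s / (2*e))"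
  have ii: "integrable lborel (indicator J :: real \<Rightarrow> real)"
    unfolding J_def by (rule integrable_real_indicator) auto
  have hi: "integrable lborel h" unfolding h_def using gi ii
    by (intro Bochner_Integration.integrable_add integrable_divide integrable_mult_right) auto
  have bnd: "\<bar>indicator J s * V s\<bar> \<le> h s" for s
  proof (cases "s \<in> J")
    case True
    have "\<bar>V s\<bar> \<le> e/2 + (V s)\<^sup>2/(2*e)" by (rule am_gm_abs[OF e])
    also have "\<dots> \<le> e/2 + g s/(2*e)" using b[of s] True e unfolding J_def by (simp add: divide_right_mono)
    finally show ?thesis using True by (simp add: h_def)
  next
    case False thus ?thesis using g0[of s] e by (simp add: h_def)
  qed
  have Vi: "integrable lborel (\<lambda>s. indicator J s * V s)"
  proof (rule Bochner_Integration.integrable_bound[OF hi])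
    show "(\<lambda>s. indicator J s * V s) \<in> borel_measurable lborel" using Vm unfolding J_def by measurable
    show "AE x in lborel. norm (indicator J x * V x) \<le> norm (h x)"
      using bnd by (auto intro!: AE_I2 order_trans[OF _ abs_ge_self])
  qed
  have "\<bar>avg V \<phi>\<bar> = \<bar>integral\<^sup>L lborel (\<lambda>s. indicator J s * V s)\<bar>"
    by (simp add: avg_def set_lebesgue_integral_def J_def)
  also have "\<dots> \<le> integral\<^sup>L lborel (\<lambda>s. \<bar>indicator J s * V s\<bar>)"
    using integral_norm_bound[of lborel "\<lambda>s. indicator J s * V s"] by simp
  also have "\<dots> \<le> integral\<^sup>L lborel h"
    by (rule Bochner_Integration.integral_mono) (use Vi hi bnd in auto)
  also have "\<dots> = e/2 + (integral\<^sup>L lborel g)/(2*e)"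
  proof -
    have "integral\<^sup>L lborel h = integral\<^sup>L lborel (\<lambda>s. (e/2) * indicator J s) + integral\<^sup>L lborel (\<lambda>s. g s / (2*e))"
      unfolding h_def using gi ii by (intro Bochner_Integration.integral_add integrable_mult_right integrable_divide) auto
    also have "integral\<^sup>L lborel (\<lambda>s. (e/2) * indicator J s) = e/2"
      unfolding J_def by simp
    finally show ?thesis by simp
  qed
  finally show ?thesis .
qed



lemma I_set_simps[simp]: "I_set (ereal k) = {-k<..k}" "I_set \<infinity> = UNIV"
  by (auto simp: I_set_def)

lemma Lr_UNIV: "Lr_pow r UNIV f = integral\<^sup>L lborel (\<lambda>x. \<bar>f x\<bar> powr r)"
  by (simp add: Lr_pow_def set_lebesgue_integral_def)

lemma in_Lr_UNIV: "in_Lr r UNIV f \<longleftrightarrow> f \<in> borel_measurable borel \<and> integrable lborel (\<lambda>x. \<bar>f x\<bar> powr r)"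
  by (simp add: in_Lr_def set_integrable_def)

lemma ind_zero_out:
  assumes "\<And>x. x \<notin> I \<Longrightarrow> f x = 0"
  shows "(\<lambda>x. indicator I x *\<^sub>R (\<bar>f x\<bar> powr r)) = (\<lambda>x. \<bar>f x\<bar> powr (r::real))"
  using assms by (auto simp: fun_eq_iff indicator_def)

lemma Lr_zero_out:
  assumes "\<And>x. x \<notin> I \<Longrightarrow> f x = 0"
  shows "Lr_pow r I f = Lr_pow r UNIV f" "in_Lr r I f \<longleftrightarrow> in_Lr r UNIV f"
proof -
  have eq: "(\<lambda>x. indicator I x *\<^sub>R (\<bar>f x\<bar> powr r)) = (\<lambda>x. \<bar>f x\<bar> powr (r::real))"
    using assms by (auto simp: fun_eq_iff indicator_def)
  show "Lr_pow r I f = Lr_pow r UNIV f" "in_Lr r I f \<longleftrightarrow> in_Lr r UNIV f"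
    by (simp_all only: Lr_pow_def in_Lr_def set_lebesgue_integral_def set_integrable_def eq indicator_UNIV scaleR_one)
qed

lemma Lr_cong:
  assumes "\<And>x. x \<in> I \<Longrightarrow> f x = g x"
  shows "Lr_pow r I f = Lr_pow r I g"
proof -
  have eq: "(\<lambda>x. indicator I x *\<^sub>R (\<bar>f x\<bar> powr r)) = (\<lambda>x. indicator I x *\<^sub>R (\<bar>g x\<bar> powr (r::real)))"
    using assms by (auto simp: fun_eq_iff indicator_def)
  show ?thesis by (simp only: Lr_pow_def set_lebesgue_integral_def eq)
qed

lemma in_Lr_cong:
  assumes "\<And>x. x \<in> I \<Longrightarrow> f x = g x" "g \<in> borel_measurable borel" "in_Lr r I f"
  shows "in_Lr r I g"
proof -
  have eq: "(\<lambda>x. indicator I x *\<^sub>R (\<bar>f x\<bar> powr r)) = (\<lambda>x. indicator I x *\<^sub>R (\<bar>g x\<bar> powr (r::real)))"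
    using assms by (auto simp: fun_eq_iff indicator_def)
  show ?thesis using assms(2,3) unfolding in_Lr_def set_integrable_def eq by simp
qed

lemma scale_ind: "t > 0 \<Longrightarrow> (\<lambda>x. indicator I x *\<^sub>R (\<bar>t * f x\<bar> powr r)) = (\<lambda>x. t powr r * (indicator I x *\<^sub>R (\<bar>f x\<bar> powr (r::real))))"
  by (auto simp: fun_eq_iff abs_mult powr_mult)

lemma Lr_scale: "t > 0 \<Longrightarrow> Lr_pow r I (\<lambda>x. t * f x) = t powr r * Lr_pow r I f"
  unfolding Lr_pow_def set_lebesgue_integral_def by (subst scale_ind) auto

lemma in_Lr_scale: assumes "t > 0" "in_Lr r I f" shows "in_Lr r I (\<lambda>x. t * f x)"
proof -
  have "f \<in> borel_measurable borel" using assms by (simp add: in_Lr_def)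
  hence "(\<lambda>x. t * f x) \<in> borel_measurable borel" by measurable
  thus ?thesis using assms unfolding in_Lr_def set_integrable_def by (subst scale_ind) auto
qed

lemma avg_scale: "avg (\<lambda>x. t * f x) = (\<lambda>\<phi>. t * avg f \<phi>)"
  by (simp add: avg_def set_integral_mult_right fun_eq_iff)

lemma Lr_nonneg: "Lr_pow r I f \<ge> 0"
  unfolding Lr_pow_def set_lebesgue_integral_def by (rule integral_nonneg_AE) (auto simp: indicator_def)

lemma periodize:
  fixes p q s R K :: real and W :: "real \<Rightarrow> real"
  assumes WM: "W \<in> M_set p q s \<infinity>" and R: "R \<ge> 0" and supp: "\<And>x. \<bar>x\<bar> > R \<Longrightarrow> W x = 0" and K: "K > R + 1"
  shows "ell p q s (ereal K) \<le> ereal (L_fun p q s \<infinity> W)"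
proof -
  from WM have Wm: "W \<in> borel_measurable borel" and W2: "in_Lr 2 UNIV W"
    and Wq: "in_Lr q UNIV (avg W)" and Wp: "in_Lr p UNIV (avg W)"
    and N0: "Lr_pow 2 UNIV W \<noteq> 0" and F0: "F_fun p q s \<infinity> W = 0"
    by (auto simp: M_set_def X_space_def in_Lr_def)
  define V where "V = (\<lambda>x::real. W (x - 2*K*real_of_int (ceiling ((x-K)/(2*K)))))"
  have Vm: "V \<in> borel_measurable borel" unfolding V_def using Wm by measurable
  have Kpos: "K > 0" using K R by simp
  have VW: "V x = W x" if x: "\<bar>x\<bar> \<le> K + 1/2" for x
  proof -
    consider "x \<in> {-K<..K}" | "x > K" | "x \<le> -K" by force
    thus ?thesis
    proof cases
      case 1
      have "ceiling ((x-K)/(2*K)) = 0"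
        by (rule ceiling_unique) (use 1 Kpos in \<open>auto simp: field_simps\<close>)
      thus ?thesis by (simp add: V_def)
    next
      case 2
      have "ceiling ((x-K)/(2*K)) = 1"
        by (rule ceiling_unique) (use 2 x Kpos K R in \<open>auto simp: field_simps\<close>)
      hence "V x = W (x - 2*K)" by (simp add: V_def)
      also have "\<dots> = 0" using 2 x K by (intro supp) auto
      also have "0 = W x" using 2 K by (intro supp[symmetric]) auto
      finally show ?thesis .
    next
      case 3
      have "ceiling ((x-K)/(2*K)) = -1"
        by (rule ceiling_unique) (use 3 x Kpos K R in \<open>auto simp: field_simps\<close>)
      hence "V x = W (x + 2*K)" by (simp add: V_def)
      also have "\<dots> = 0" using 3 x K by (intro supp) auto
      also have "0 = W x" using 3 K by (intro supp[symmetric]) auto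
      finally show ?thesis .
    qed
  qed
  have per: "periodic_fun (ereal K) V"
  proof -
    have "V (x + 2*K) = V x" for x
    proof -
      have "(x + 2*K - K)/(2*K) = (x-K)/(2*K) + 1" using Kpos by (simp add: field_simps)
      hence "ceiling ((x + 2*K - K)/(2*K)) = ceiling ((x-K)/(2*K)) + 1" by simp
      thus ?thesis by (simp add: V_def algebra_simps)
    qed
    thus ?thesis by (simp add: periodic_fun_def)
  qed
  have Wout: "W x = 0" if "x \<notin> {-K<..K}" for x using that K by (intro supp) auto
  have avgV: "avg V \<phi> = avg W \<phi>" if "\<phi> \<in> {-K<..K}" for \<phi>
    by (rule avg_cong) (use that in \<open>auto intro!: VW\<close>)
  have avgW0: "avg W \<phi> = 0" if "\<phi> \<notin> {-K<..K}" for \<phi>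
  proof -
    have "avg W \<phi> = avg (\<lambda>_. 0) \<phi>" by (rule avg_cong) (use that K in \<open>auto intro!: supp\<close>)
    thus ?thesis by (simp add: avg_def)
  qed
  have avgVm: "avg V \<in> borel_measurable borel" by (rule avg_meas[OF Vm])
  have N: "Lr_pow 2 {-K<..K} V = Lr_pow 2 UNIV W"
  proof -
    have "Lr_pow 2 {-K<..K} V = Lr_pow 2 {-K<..K} W" by (rule Lr_cong) (use VW in auto)
    also have "\<dots> = Lr_pow 2 UNIV W" by (rule Lr_zero_out(1)) (rule Wout)
    finally show ?thesis .
  qed
  have N2: "in_Lr 2 {-K<..K} V"
  proof (rule in_Lr_cong[of _ W, OF _ Vm])
    show "in_Lr 2 {-K<..K} W" using Lr_zero_out(2)[of "{-K<..K}" W 2] Wout W2 by blast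
  qed (use VW in auto)
  have A: "Lr_pow r {-K<..K} (avg V) = Lr_pow r UNIV (avg W)" for r
  proof -
    have "Lr_pow r {-K<..K} (avg V) = Lr_pow r {-K<..K} (avg W)" by (rule Lr_cong) (use avgV in auto)
    also have "\<dots> = Lr_pow r UNIV (avg W)" by (rule Lr_zero_out(1)) (rule avgW0)
    finally show ?thesis .
  qed
  have A2: "in_Lr r {-K<..K} (avg V)" if "in_Lr r UNIV (avg W)" for r
  proof (rule in_Lr_cong[of _ "avg W", OF _ avgVm])
    show "in_Lr r {-K<..K} (avg W)" using Lr_zero_out(2)[of "{-K<..K}" "avg W" r] avgW0 that by blast
  qed (use avgV in auto)
  have VM: "V \<in> M_set p q s (ereal K)"
    using per N2 A2[OF Wq] A2[OF Wp] N N0 F0 A Vm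
    by (simp add: M_set_def X_space_def F_fun_def Q_fun_def P_fun_def)
  have L: "L_fun p q s (ereal K) V = L_fun p q s \<infinity> W"
    using N A by (simp add: L_fun_def Q_fun_def P_fun_def)
  have "ell p q s (ereal K) \<le> ereal (L_fun p q s (ereal K) V)"
    unfolding ell_def by (rule INF_lower[OF VM])
  thus ?thesis using L by simp
qed



definition trunc :: "nat \<Rightarrow> (real \<Rightarrow> real) \<Rightarrow> real \<Rightarrow> real" where
  "trunc n W s = (if \<bar>s\<bar> \<le> real n then W s else 0)"

lemma trunc_meas: assumes "W \<in> borel_measurable borel" shows "trunc n W \<in> borel_measurable borel"
  using assms unfolding trunc_def by measurable

lemma eventually_ge_abs: "\<forall>\<^sub>F n in sequentially. \<bar>x::real\<bar> + c \<le> real n"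
proof -
  obtain N :: nat where "\<bar>x\<bar> + c \<le> real N" using real_arch_simple by blast
  thus ?thesis unfolding eventually_sequentially by (intro exI[of _ N]) auto
qed

lemma L2_conv:
  fixes W :: "real \<Rightarrow> real"
  assumes Wm: "W \<in> borel_measurable borel" and Wi: "integrable lborel (\<lambda>x. \<bar>W x\<bar> powr 2)"
  shows "integrable lborel (\<lambda>x. \<bar>trunc n W x\<bar> powr 2)"
    and "(\<lambda>n. integral\<^sup>L lborel (\<lambda>x. \<bar>trunc n W x\<bar> powr 2)) \<longlonglongrightarrow> integral\<^sup>L lborel (\<lambda>x. \<bar>W x\<bar> powr 2)"
proof -
  have b: "norm (\<bar>trunc n W x\<bar> powr 2) \<le> \<bar>W x\<bar> powr 2" for n x by (simp add: trunc_def)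
  show "integrable lborel (\<lambda>x. \<bar>trunc n W x\<bar> powr 2)"
    by (rule Bochner_Integration.integrable_bound[OF Wi]) (use Wm b in \<open>auto simp: trunc_def\<close>)
  show "(\<lambda>n. integral\<^sup>L lborel (\<lambda>x. \<bar>trunc n W x\<bar> powr 2)) \<longlonglongrightarrow> integral\<^sup>L lborel (\<lambda>x. \<bar>W x\<bar> powr 2)"
  proof (rule integral_dominated_convergence[OF _ _ Wi])
    show "(\<lambda>x. \<bar>W x\<bar> powr 2) \<in> borel_measurable lborel" using Wm by measurable
    show "(\<lambda>x. \<bar>trunc n W x\<bar> powr 2) \<in> borel_measurable lborel" for n using Wm unfolding trunc_def by measurable
    show "AE x in lborel. (\<lambda>n. \<bar>trunc n W x\<bar> powr 2) \<longlonglongrightarrow> \<bar>W x\<bar> powr 2"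
    proof (rule AE_I2)
      fix x show "(\<lambda>n. \<bar>trunc n W x\<bar> powr 2) \<longlonglongrightarrow> \<bar>W x\<bar> powr 2"
        by (intro tendsto_eventually eventually_mono[OF eventually_ge_abs[of x 0]]) (auto simp: trunc_def)
    qed
    show "AE x in lborel. norm (\<bar>trunc n W x\<bar> powr 2) \<le> \<bar>W x\<bar> powr 2" for n using b by auto
  qed
qed

lemma tail_conv:
  fixes W :: "real \<Rightarrow> real"
  assumes Wm: "W \<in> borel_measurable borel" and Wi: "integrable lborel (\<lambda>x. (W x)\<^sup>2)"
  shows "integrable lborel (\<lambda>x. if \<bar>x\<bar> \<ge> c then (W x)\<^sup>2 else 0)"
    and "(\<lambda>n::nat. integral\<^sup>L lborel (\<lambda>x. if \<bar>x\<bar> \<ge> real n - 1 then (W x)\<^sup>2 else 0)) \<longlonglongrightarrow> 0"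
proof -
  have b: "norm (if \<bar>x\<bar> \<ge> c then (W x)\<^sup>2 else 0) \<le> (W x)\<^sup>2" for x c by simp
  show "integrable lborel (\<lambda>x. if \<bar>x\<bar> \<ge> c then (W x)\<^sup>2 else 0)"
    by (rule Bochner_Integration.integrable_bound[OF Wi]) (use Wm b in auto)
  have "(\<lambda>n::nat. integral\<^sup>L lborel (\<lambda>x. if \<bar>x\<bar> \<ge> real n - 1 then (W x)\<^sup>2 else 0)) \<longlonglongrightarrow> integral\<^sup>L lborel (\<lambda>x::real. 0::real)"
  proof (rule integral_dominated_convergence[OF _ _ Wi])
    show "(\<lambda>x. if \<bar>x\<bar> \<ge> real n - 1 then (W x)\<^sup>2 else 0) \<in> borel_measurable lborel" for n using Wm by measurable
    show "AE x in lborel. (\<lambda>n. if \<bar>x\<bar> \<ge> real n - 1 then (W x)\<^sup>2 else 0) \<longlonglongrightarrow> 0"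
    proof (rule AE_I2)
      fix x show "(\<lambda>n. if \<bar>x\<bar> \<ge> real n - 1 then (W x)\<^sup>2 else 0) \<longlonglongrightarrow> 0"
        by (intro tendsto_eventually eventually_mono[OF eventually_ge_abs[of x 2]]) auto
    qed
    show "AE x in lborel. norm (if \<bar>x\<bar> \<ge> real n - 1 then (W x)\<^sup>2 else 0) \<le> (W x)\<^sup>2" for n using b by auto
  qed auto
  thus "(\<lambda>n::nat. integral\<^sup>L lborel (\<lambda>x. if \<bar>x\<bar> \<ge> real n - 1 then (W x)\<^sup>2 else 0)) \<longlonglongrightarrow> 0" by simp
qed



lemma avg_conv:
  fixes W :: "real \<Rightarrow> real" and r :: real
  assumes Wm: "W \<in> borel_measurable borel" and Wi: "integrable lborel (\<lambda>x. (W x)\<^sup>2)"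
    and r: "r > 0" and Ai: "integrable lborel (\<lambda>x. \<bar>avg W x\<bar> powr r)"
  shows "integrable lborel (\<lambda>x. \<bar>avg (trunc n W) x\<bar> powr r)"
    and "(\<lambda>n. integral\<^sup>L lborel (\<lambda>x. \<bar>avg (trunc n W) x\<bar> powr r)) \<longlonglongrightarrow> integral\<^sup>L lborel (\<lambda>x. \<bar>avg W x\<bar> powr r)"
proof -
  define g where "g = (\<lambda>(n::nat) x. if \<bar>x\<bar> \<ge> real n - 1 then (W x)\<^sup>2 else 0)"
  define T where "T = (\<lambda>n. integral\<^sup>L lborel (g n))"
  define \<eta> where "\<eta> = (\<lambda>n. sqrt (T n) + inverse (real (Suc n)))"
  define A where "A = avg W"
  define B where "B = (\<lambda>n. avg (trunc n W))"
  have gi: "integrable lborel (g n)" for n unfolding g_def by (rule tail_conv(1)[OF Wm Wi])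
  have T0: "T n \<ge> 0" for n unfolding T_def g_def by (rule integral_nonneg_AE) auto
  have Tlim: "T \<longlonglongrightarrow> 0" unfolding T_def g_def by (rule tail_conv(2)[OF Wm Wi])
  have \<eta>pos: "\<eta> n > 0" for n unfolding \<eta>_def using T0[of n] by (simp add: add_nonneg_pos)
  have \<eta>lim: "\<eta> \<longlonglongrightarrow> 0"
  proof -
    have "(\<lambda>n. sqrt (T n)) \<longlonglongrightarrow> sqrt 0" by (intro tendsto_real_sqrt Tlim)
    hence "(\<lambda>n. sqrt (T n) + inverse (real (Suc n))) \<longlonglongrightarrow> 0 + 0"
      by (intro tendsto_add LIMSEQ_inverse_real_of_nat) auto
    thus ?thesis unfolding \<eta>_def by simp
  qed
  have Am: "A \<in> borel_measurable borel" unfolding A_def by (rule avg_meas[OF Wm])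
  have Bm: "B n \<in> borel_measurable borel" for n unfolding B_def by (rule avg_meas[OF trunc_meas[OF Wm]])
  have Bbound: "\<bar>B n \<phi>\<bar> \<le> \<eta> n" if \<phi>: "\<bar>\<phi>\<bar> \<ge> real n - 1/2" for n \<phi>
  proof -
    have "\<bar>B n \<phi>\<bar> \<le> \<eta> n / 2 + T n / (2 * \<eta> n)"
      unfolding B_def T_def
    proof (rule avg_small[OF trunc_meas[OF Wm] gi _ _ \<eta>pos])
      show "0 \<le> g n s" for s by (simp add: g_def)
      fix s assume s: "s \<in> {\<phi> - 1/2..\<phi> + 1/2}"
      show "(trunc n W s)\<^sup>2 \<le> g n s"
      proof (cases "\<bar>s\<bar> \<le> real n")
        case True
        have "\<bar>s\<bar> \<ge> real n - 1" using s \<phi> by auto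
        thus ?thesis using True by (simp add: trunc_def g_def)
      qed (simp add: trunc_def g_def)
    qed
    also have "T n / (2 * \<eta> n) \<le> \<eta> n / 2"
    proof -
      have "sqrt (T n) \<le> \<eta> n" unfolding \<eta>_def by simp
      hence "(sqrt (T n))\<^sup>2 \<le> (\<eta> n)\<^sup>2" using T0[of n] by (intro power_mono) auto
      hence "T n \<le> (\<eta> n)\<^sup>2" using T0[of n] by simp
      thus ?thesis using \<eta>pos[of n] by (simp add: field_simps power2_eq_square)
    qed
    finally show ?thesis by simp
  qed
  have eqA: "B n \<phi> = A \<phi>" if "\<bar>\<phi>\<bar> \<le> real n - 1/2" for n \<phi>
    unfolding A_def B_def by (rule avg_cong) (use that in \<open>auto simp: trunc_def\<close>)
  have zeroB: "B n \<phi> = 0" if "\<bar>\<phi>\<bar> > real n + 1/2" for n \<phi>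
  proof -
    have "B n \<phi> = avg (\<lambda>_. 0) \<phi>" unfolding B_def by (rule avg_cong) (use that in \<open>auto simp: trunc_def\<close>)
    thus ?thesis by (simp add: avg_def)
  qed
  define D1 where "D1 = (\<lambda>n \<phi>. if \<bar>\<phi>\<bar> \<le> real n - 1/2 then \<bar>A \<phi>\<bar> powr r else 0)"
  define D2 where "D2 = (\<lambda>n \<phi>. if real n - 1/2 < \<bar>\<phi>\<bar> \<and> \<bar>\<phi>\<bar> \<le> real n + 1/2 then \<bar>B n \<phi>\<bar> powr r else 0)"
  define H where "H = (\<lambda>n \<phi>. \<eta> n powr r * (indicator {real n - 1/2<..real n + 1/2} \<phi> + indicator {-real n - 1/2..<-real n + 1/2} \<phi>))"
  have dec: "\<bar>B n \<phi>\<bar> powr r = D1 n \<phi> + D2 n \<phi>" for n \<phi>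
    using eqA[of \<phi> n] zeroB[of n \<phi>] by (auto simp: D1_def D2_def)
  have D2H: "D2 n \<phi> \<le> H n \<phi>" for n \<phi>
  proof (cases "real n - 1/2 < \<bar>\<phi>\<bar> \<and> \<bar>\<phi>\<bar> \<le> real n + 1/2")
    case True
    have "\<bar>B n \<phi>\<bar> powr r \<le> \<eta> n powr r" using Bbound[of n \<phi>] True r by (intro powr_mono2) auto
    moreover have "1 \<le> indicator {real n - 1/2<..real n + 1/2} \<phi> + (indicator {-real n - 1/2..<-real n + 1/2} \<phi> :: real)"
      using True by (auto simp: indicator_def)
    moreover have "\<eta> n powr r * 1 \<le> \<eta> n powr r * (indicator {real n - 1/2<..real n + 1/2} \<phi> + indicator {-real n - 1/2..<-real n + 1/2} \<phi>)"
      by (rule mult_left_mono) (use calculation in auto)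
    ultimately show ?thesis using True by (simp add: D2_def H_def)
  next
    case False
    have "0 \<le> H n \<phi>" unfolding H_def by (intro mult_nonneg_nonneg add_nonneg_nonneg) auto
    thus ?thesis using False unfolding D2_def by auto
  qed
  have D2nn: "D2 n \<phi> \<ge> 0" for n \<phi> by (simp add: D2_def)
  have Hi: "integrable lborel (H n)" for n
    unfolding H_def
    by (intro integrable_mult_right Bochner_Integration.integrable_add integrable_real_indicator) auto
  have Hint: "integral\<^sup>L lborel (H n) = 2 * \<eta> n powr r" for n
  proof -
    have "integral\<^sup>L lborel (H n) = \<eta> n powr r * (integral\<^sup>L lborel (indicator {real n - 1/2<..real n + 1/2} :: real \<Rightarrow> real)
        + integral\<^sup>L lborel (indicator {-real n - 1/2..<-real n + 1/2} :: real \<Rightarrow> real))"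
      unfolding H_def
      by (subst integral_mult_right_zero, subst Bochner_Integration.integral_add)
         (auto intro!: integrable_real_indicator)
    thus ?thesis by simp
  qed
  have D1m: "D1 n \<in> borel_measurable lborel" for n unfolding D1_def using Am by measurable
  have D2m: "D2 n \<in> borel_measurable lborel" for n unfolding D2_def using Bm[of n] by measurable
  have D1i: "integrable lborel (D1 n)" for n
    by (rule Bochner_Integration.integrable_bound[OF Ai D1m]) (auto simp: D1_def A_def)
  have D2i: "integrable lborel (D2 n)" for n
  proof (rule Bochner_Integration.integrable_bound[OF Hi[of n] D2m], intro AE_I2)
    fix x have "0 \<le> D2 n x" "D2 n x \<le> H n x" using D2nn D2H by auto
    thus "norm (D2 n x) \<le> norm (H n x)" by simp
  qed
  have Bfun: "(\<lambda>x. \<bar>B n x\<bar> powr r) = (\<lambda>x. D1 n x + D2 n x)" for n using dec by auto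
  show "integrable lborel (\<lambda>x. \<bar>avg (trunc n W) x\<bar> powr r)"
    using Bfun[of n] D1i[of n] D2i[of n] unfolding B_def by simp
  have intdec: "integral\<^sup>L lborel (\<lambda>x. \<bar>B n x\<bar> powr r) = integral\<^sup>L lborel (D1 n) + integral\<^sup>L lborel (D2 n)" for n
    unfolding Bfun by (rule Bochner_Integration.integral_add[OF D1i D2i])
  have lim1: "(\<lambda>n. integral\<^sup>L lborel (D1 n)) \<longlonglongrightarrow> integral\<^sup>L lborel (\<lambda>x. \<bar>A x\<bar> powr r)"
  proof (rule integral_dominated_convergence[OF _ D1m], unfold A_def)
    show "(\<lambda>x. \<bar>avg W x\<bar> powr r) \<in> borel_measurable lborel" using Am unfolding A_def by measurable
    show "integrable lborel (\<lambda>x. \<bar>avg W x\<bar> powr r)" by (rule Ai)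
    show "AE x in lborel. (\<lambda>n. D1 n x) \<longlonglongrightarrow> \<bar>avg W x\<bar> powr r"
    proof (rule AE_I2)
      fix x show "(\<lambda>n. D1 n x) \<longlonglongrightarrow> \<bar>avg W x\<bar> powr r"
        by (intro tendsto_eventually eventually_mono[OF eventually_ge_abs[of x 1]]) (auto simp: D1_def A_def)
    qed
    show "AE x in lborel. norm (D1 n x) \<le> \<bar>avg W x\<bar> powr r" for n by (auto simp: D1_def A_def)
  qed
  have lim2: "(\<lambda>n. integral\<^sup>L lborel (D2 n)) \<longlonglongrightarrow> 0"
  proof (rule real_tendsto_sandwich[of "\<lambda>_. 0" _ _ "\<lambda>n. 2 * \<eta> n powr r"])
    show "\<forall>\<^sub>F n in sequentially. 0 \<le> integral\<^sup>L lborel (D2 n)"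
      using D2nn by (auto intro!: integral_nonneg_AE)
    show "\<forall>\<^sub>F n in sequentially. integral\<^sup>L lborel (D2 n) \<le> 2 * \<eta> n powr r"
    proof (rule always_eventually, rule allI)
      fix n
      have "integral\<^sup>L lborel (D2 n) \<le> integral\<^sup>L lborel (H n)"
        by (rule Bochner_Integration.integral_mono[OF D2i Hi]) (rule D2H)
      thus "integral\<^sup>L lborel (D2 n) \<le> 2 * \<eta> n powr r" using Hint[of n] by simp
    qed
    have "(\<lambda>n. \<eta> n powr r) \<longlonglongrightarrow> 0"
      by (rule tendsto_zero_powrI[OF \<eta>lim tendsto_const]) (use \<eta>pos r in \<open>auto intro!: always_eventually less_imp_le\<close>)
    thus "(\<lambda>n. 2 * \<eta> n powr r) \<longlonglongrightarrow> 0" using tendsto_mult_right_zero by blast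
  qed auto
  have "(\<lambda>n. integral\<^sup>L lborel (D1 n) + integral\<^sup>L lborel (D2 n)) \<longlonglongrightarrow> integral\<^sup>L lborel (\<lambda>x. \<bar>A x\<bar> powr r) + 0"
    by (intro tendsto_add lim1 lim2)
  thus "(\<lambda>n. integral\<^sup>L lborel (\<lambda>x. \<bar>avg (trunc n W) x\<bar> powr r)) \<longlonglongrightarrow> integral\<^sup>L lborel (\<lambda>x. \<bar>avg W x\<bar> powr r)"
    using intdec unfolding B_def A_def by simp
qed



lemma density:
  fixes p q s e :: real and W :: "real \<Rightarrow> real"
  assumes p: "p > 2" "1 < q" "q < p" and s: "s > 0" and WM: "W \<in> M_set p q s \<infinity>" and e: "e > 0"
  shows "\<exists>W' R. W' \<in> M_set p q s \<infinity> \<and> R \<ge> 0 \<and> (\<forall>x. \<bar>x\<bar> > R \<longrightarrow> W' x = 0)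
           \<and> L_fun p q s \<infinity> W' < L_fun p q s \<infinity> W + e"
proof -
  from WM have Wm: "W \<in> borel_measurable borel" and W2: "integrable lborel (\<lambda>x. \<bar>W x\<bar> powr 2)"
    and Aq: "integrable lborel (\<lambda>x. \<bar>avg W x\<bar> powr q)" and Ap: "integrable lborel (\<lambda>x. \<bar>avg W x\<bar> powr p)"
    and N0: "Lr_pow 2 UNIV W \<noteq> 0" and F0: "F_fun p q s \<infinity> W = 0"
    by (auto simp: M_set_def X_space_def in_Lr_UNIV)
  have Wi: "integrable lborel (\<lambda>x. (W x)\<^sup>2)" using W2 by (simp add: abs_powr2)
  define N where "N = Lr_pow 2 UNIV W"
  define Q where "Q = Lr_pow q UNIV (avg W)"
  define P where "P = Lr_pow p UNIV (avg W)"
  define Nn where "Nn = (\<lambda>n. Lr_pow 2 UNIV (trunc n W))"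
  define Qn where "Qn = (\<lambda>n. Lr_pow q UNIV (avg (trunc n W)))"
  define Pn where "Pn = (\<lambda>n. Lr_pow p UNIV (avg (trunc n W)))"
  have Npos: "N > 0" using N0 Lr_nonneg[of 2 UNIV W] unfolding N_def by linarith
  have Feq: "s * N + q * Q - p * P = 0" using F0 by (simp add: F_fun_def Q_fun_def P_fun_def N_def Q_def P_def)
  have limN: "(\<lambda>n. s * Nn n) \<longlonglongrightarrow> s * N"
    unfolding Nn_def N_def Lr_UNIV by (intro tendsto_mult tendsto_const L2_conv(2)[OF Wm W2])
  have limQ: "Qn \<longlonglongrightarrow> Q"
    unfolding Qn_def Q_def Lr_UNIV using avg_conv(2)[OF Wm Wi _ Aq] p by simp
  have limP: "Pn \<longlonglongrightarrow> P"
    unfolding Pn_def P_def Lr_UNIV using avg_conv(2)[OF Wm Wi _ Ap] p by simp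
  have ev: "\<forall>\<^sub>F n in sequentially. s * Nn n > 0 \<and> (\<exists>t>0. t powr 2 * (s * Nn n) + q * (t powr q * Qn n) - p * (t powr p * Pn n) = 0
      \<and> t powr 2 * (s * Nn n) / 2 + t powr q * Qn n - t powr p * Pn n < s * N / 2 + Q - P + e)"
    by (rule rescale[OF p _ _ _ Feq limN limQ limP _ _ _ e])
       (use s Npos Lr_nonneg in \<open>auto simp: Nn_def Qn_def Pn_def Q_def P_def\<close>)
  then obtain n t where n: "s * Nn n > 0" and t: "t > 0"
    and tF: "t powr 2 * (s * Nn n) + q * (t powr q * Qn n) - p * (t powr p * Pn n) = 0"
    and tL: "t powr 2 * (s * Nn n) / 2 + t powr q * Qn n - t powr p * Pn n < s * N / 2 + Q - P + e"
    unfolding eventually_sequentially by blast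
  define W' where "W' = (\<lambda>x. t * trunc n W x)"
  have Tm: "trunc n W \<in> borel_measurable borel" by (rule trunc_meas[OF Wm])
  have T2: "in_Lr 2 UNIV (trunc n W)" using Tm L2_conv(1)[OF Wm W2] by (simp add: in_Lr_UNIV)
  have Tq: "in_Lr q UNIV (avg (trunc n W))" using avg_meas[OF Tm] avg_conv(1)[OF Wm Wi _ Aq] p by (simp add: in_Lr_UNIV)
  have Tp: "in_Lr p UNIV (avg (trunc n W))" using avg_meas[OF Tm] avg_conv(1)[OF Wm Wi _ Ap] p by (simp add: in_Lr_UNIV)
  have avgW': "avg W' = (\<lambda>\<phi>. t * avg (trunc n W) \<phi>)" unfolding W'_def by (rule avg_scale)
  have N': "Lr_pow 2 UNIV W' = t powr 2 * Nn n" unfolding W'_def Nn_def by (rule Lr_scale[OF t])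
  have Q': "Lr_pow q UNIV (avg W') = t powr q * Qn n" unfolding avgW' Qn_def by (rule Lr_scale[OF t])
  have P': "Lr_pow p UNIV (avg W') = t powr p * Pn n" unfolding avgW' Pn_def by (rule Lr_scale[OF t])
  have X: "W' \<in> X_space p q \<infinity>"
    unfolding X_space_def avgW' using in_Lr_scale[OF t T2] in_Lr_scale[OF t Tq] in_Lr_scale[OF t Tp]
    by (simp add: periodic_fun_def W'_def avg_scale)
  have NZ: "Lr_pow 2 UNIV W' \<noteq> 0" using N' t n s by (simp add: zero_less_mult_iff)
  have FZ: "F_fun p q s \<infinity> W' = 0" using tF N' Q' P' by (simp add: F_fun_def Q_fun_def P_fun_def algebra_simps)
  have M': "W' \<in> M_set p q s \<infinity>" using X NZ FZ by (simp add: M_set_def)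
  have L': "L_fun p q s \<infinity> W' < L_fun p q s \<infinity> W + e"
    using tL N' Q' P' by (simp add: L_fun_def Q_fun_def P_fun_def N_def Q_def P_def algebra_simps)
  have supp: "\<forall>x. \<bar>x\<bar> > real n \<longrightarrow> W' x = 0" by (simp add: W'_def trunc_def)
  show ?thesis using M' L' supp by (intro exI[of _ W'] exI[of _ "real n"]) auto
qed

theorem lemma11:
  fixes p q sig2 :: real
  assumes "p > 2" and "1 < q" and "q < p" and "sig2 > 0"
  shows "Limsup at_top (\<lambda>K::real. ell p q sig2 (ereal K)) \<le> ell p q sig2 \<infinity>"
  unfolding ell_def[of p q sig2 \<infinity>]
proof (rule INF_greatest)
  fix W assume WM: "W \<in> M_set p q sig2 \<infinity>"
  show "Limsup at_top (\<lambda>K::real. ell p q sig2 (ereal K)) \<le> ereal (L_fun p q sig2 \<infinity> W)"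
  proof (rule ereal_le_epsilon2)
    fix e :: real assume e: "e > 0"
    obtain W' R where W': "W' \<in> M_set p q sig2 \<infinity>" "R \<ge> 0" "\<forall>x. \<bar>x\<bar> > R \<longrightarrow> W' x = 0"
      "L_fun p q sig2 \<infinity> W' < L_fun p q sig2 \<infinity> W + e"
      using density[OF assms WM e] by blast
    show "Limsup at_top (\<lambda>K::real. ell p q sig2 (ereal K)) \<le> ereal (L_fun p q sig2 \<infinity> W) + ereal e"
    proof (rule Limsup_bounded, rule eventually_mono[OF eventually_gt_at_top[of "R + 1"]])
      fix K :: real assume K: "K > R + 1"
      have "ell p q sig2 (ereal K) \<le> ereal (L_fun p q sig2 \<infinity> W')"
        by (rule periodize[OF W'(1,2) _ K]) (use W'(3) in auto)
      also have "\<dots> \<le> ereal (L_fun p q sig2 \<infinity> W) + ereal e" using W'(4) by simp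
      finally show "ell p q sig2 (ereal K) \<le> ereal (L_fun p q sig2 \<infinity> W) + ereal e" .
    qed
  qed
qed


end
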